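(* Let $D\subset\mathbb N^n$ be finite, not contained in any coordinate hyperplane, $p$ a prime, and $U\in E_{D,p}(r)$ a minimal solution. Then $\mathrm{Im}\,\varphi_U\subset\Sigma_p(D)$.
   Context: $s_p$ = base-$p$ digit sum. $E_{D,p}(r)$ = set of $U=(u_{\mathbf d})\in\{0,\dots,p^r-1\}^D$ with $\sum u_{\mathbf d}\mathbf d\equiv0\pmod{p^r-1}$ and all coordinates of $\sum u_{\mathbf d}\mathbf d$ positive; $s_p(U)=\sum s_p(u_{\mathbf d})$; $\delta_p(D)=\frac1{p-1}\min_{r\ge1}\min_{U\in E_{D,p}(r)}s_p(U)/r$; $U\in E_{D,p}(r)$ is minimal if $s_p(U)=(p-1)r\delta_p(D)$. Shift $\delta_r$: $k\mapsto pk\bmod(p^r-1)$ for $k\le p^r-2$, $p^r-1\mapsto p^r-1$, coordinatewise. $\varphi_U(k)=\frac1{p^r-1}\sum\mathbf d(\delta_r^kU)_{\mathbf d}$ for $k\in\mathbb Z/r\mathbb Z$; $U$ irreducible if $\varphi_U$ injective; $MI_{D,p}$ = set of minimal irreducible elements of all lengths; $\Sigma_p(D)=\bigcup_{U\in MI_{D,p}}\mathrm{Im}\varphi_U$. *)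

theory Defs
  imports Complex_Main "HOL-Computational_Algebra.Primes"
begin

(* Points of N^n are modelled as functions 'n \<Rightarrow> nat for a finite index type 'n. *)

fun digit_sum :: "nat \<Rightarrow> nat \<Rightarrow> nat" where
  "digit_sum p k = (if p \<le> 1 \<or> k = 0 then 0 else k mod p + digit_sum p (k div p))"

definition vsum :: "('n \<Rightarrow> nat) set \<Rightarrow> (('n \<Rightarrow> nat) \<Rightarrow> nat) \<Rightarrow> 'n \<Rightarrow> nat" where
  "vsum D U = (\<lambda>i. \<Sum>d\<in>D. U d * d i)"

(* E_{D,p}(r); U is a family indexed by D (extensional: zero outside D) *)
definition E_set :: "('n \<Rightarrow> nat) set \<Rightarrow> nat \<Rightarrow> nat \<Rightarrow> (('n \<Rightarrow> nat) \<Rightarrow> nat) set" where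
  "E_set D p r = {U. 1 \<le> r \<and> (\<forall>d\<in>D. U d \<le> p ^ r - 1) \<and> (\<forall>d. d \<notin> D \<longrightarrow> U d = 0)
      \<and> (\<forall>i. (p ^ r - 1) dvd vsum D U i) \<and> (\<forall>i. 0 < vsum D U i)}"

definition sp :: "('n \<Rightarrow> nat) set \<Rightarrow> nat \<Rightarrow> (('n \<Rightarrow> nat) \<Rightarrow> nat) \<Rightarrow> nat" where
  "sp D p U = (\<Sum>d\<in>D. digit_sum p (U d))"

(* \<delta>_p(D); the minimum is written as an infimum (it equals the minimum when attained) *)
definition delta :: "nat \<Rightarrow> ('n \<Rightarrow> nat) set \<Rightarrow> real" where
  "delta p D = (1 / (real p - 1)) *
     Inf {real (sp D p U) / real r | r U. 1 \<le> r \<and> U \<in> E_set D p r}"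

definition minimal :: "('n \<Rightarrow> nat) set \<Rightarrow> nat \<Rightarrow> nat \<Rightarrow> (('n \<Rightarrow> nat) \<Rightarrow> nat) \<Rightarrow> bool" where
  "minimal D p r U \<longleftrightarrow> U \<in> E_set D p r \<and>
     real (sp D p U) = (real p - 1) * real r * delta p D"

definition shift_num :: "nat \<Rightarrow> nat \<Rightarrow> nat \<Rightarrow> nat" where
  "shift_num p r k = (if k = p ^ r - 1 then p ^ r - 1 else (p * k) mod (p ^ r - 1))"

definition shift :: "nat \<Rightarrow> nat \<Rightarrow> (('n \<Rightarrow> nat) \<Rightarrow> nat) \<Rightarrow> (('n \<Rightarrow> nat) \<Rightarrow> nat)" where
  "shift p r U = (\<lambda>d. shift_num p r (U d))"

(* \<phi>_U(k) for k \<in> Z/rZ, represented by k \<in> {0..<r} *)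
definition phi :: "('n \<Rightarrow> nat) set \<Rightarrow> nat \<Rightarrow> nat \<Rightarrow> (('n \<Rightarrow> nat) \<Rightarrow> nat) \<Rightarrow> nat \<Rightarrow> ('n \<Rightarrow> real)" where
  "phi D p r U k = (\<lambda>i. real (vsum D ((shift p r ^^ k) U) i) / real (p ^ r - 1))"

definition irreducible_sol :: "('n \<Rightarrow> nat) set \<Rightarrow> nat \<Rightarrow> nat \<Rightarrow> (('n \<Rightarrow> nat) \<Rightarrow> nat) \<Rightarrow> bool" where
  "irreducible_sol D p r U \<longleftrightarrow> inj_on (phi D p r U) {0..<r}"

(* MI_{D,p}: minimal irreducible elements, paired with their length r *)
definition MI :: "('n \<Rightarrow> nat) set \<Rightarrow> nat \<Rightarrow> (nat \<times> (('n \<Rightarrow> nat) \<Rightarrow> nat)) set" where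
  "MI D p = {(r, U). minimal D p r U \<and> irreducible_sol D p r U}"

definition Sigma_p :: "nat \<Rightarrow> ('n \<Rightarrow> nat) set \<Rightarrow> ('n \<Rightarrow> real) set" where
  "Sigma_p p D = (\<Union>(r, U)\<in>MI D p. phi D p r U ` {0..<r})"

end

theory Submission imports Defs begin

declare digit_sum.simps[simp del]

lemma ds0[simp]: "digit_sum p 0 = 0"
  by (subst digit_sum.simps) simp

lemma cand:
  fixes p R j x :: nat
  assumes p: "p \<ge> 2" and j: "j \<le> R" and x: "x \<le> p^R - 1"
  shows "(x mod p^(R-j))*p^j + x div p^(R-j) \<le> p^R - 1"
    and "p^j * x = ((x mod p^(R-j))*p^j + x div p^(R-j)) + (x div p^(R-j))*(p^R-1)"
    and "((x mod p^(R-j))*p^j + x div p^(R-j) = p^R - 1) \<longleftrightarrow> x = p^R - 1"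
proof -
  define a where "a = x div p^(R-j)"
  define b where "b = x mod p^(R-j)"
  define q where "q = p^(R-j)"
  define P where "P = p^j"
  have qP: "q * P = p^R" unfolding q_def P_def using j by (simp add: power_add[symmetric])
  have qpos: "q > 0" "P > 0" using p unfolding q_def P_def by auto
  have pR: "p^R \<ge> 1" using p by simp
  have xR: "x < p^R" using x pR by linarith
  have xab: "x = a*q + b" unfolding a_def b_def q_def by (rule div_mult_mod_eq[symmetric])
  have bq: "b < q" unfolding b_def q_def using qpos(1) q_def by simp
  have aP: "a < P" proof (rule ccontr)
    assume "\<not> a < P" then have "a*q \<ge> P*q" by (simp add: mult_right_mono)
    moreover have "x \<ge> a*q" using xab by simp
    moreover have "P*q = p^R" using qP by (simp add: mult.commute)
    ultimately show False using xR by linarith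
  qed
  have c1: "b*P + a + 1 \<le> p^R"
  proof -
    have "b*P + a + 1 \<le> b*P + P" using aP by simp
    also have "\<dots> = (b+1)*P" by simp
    also have "\<dots> \<le> q*P" using bq by (intro mult_right_mono) auto
    finally show ?thesis using qP by simp
  qed
  show "(x mod p^(R-j))*p^j + x div p^(R-j) \<le> p^R - 1"
    using c1 unfolding a_def b_def P_def by simp
  have eq: "P * x = (b*P + a) + a*(p^R-1)"
  proof -
    have "P*x = a*(q*P) + b*P" using xab by (simp add: algebra_simps)
    also have "\<dots> = a*p^R + b*P" using qP by simp
    also have "a*p^R = a + a*(p^R-1)" using pR
      by (simp add: diff_mult_distrib2)
    finally show ?thesis by simp
  qed
  show "p^j * x = ((x mod p^(R-j))*p^j + x div p^(R-j)) + (x div p^(R-j))*(p^R-1)"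
    using eq unfolding a_def b_def P_def by simp
  have "(b*P + a = p^R - 1) \<longleftrightarrow> x = p^R - 1"
  proof
    assume h: "b*P + a = p^R - 1"
    then have h1: "b*P + a + 1 = q*P" using qP pR by simp
    have "b + 1 \<ge> q"
    proof (rule ccontr)
      assume "\<not> b + 1 \<ge> q" then have "b + 2 \<le> q" by simp
      then have "(b+2)*P \<le> q*P" by (intro mult_right_mono) auto
      then show False using h1 aP by simp
    qed
    then have bb: "b + 1 = q" using bq by simp
    have "q*P = b*P + P" by (subst bb[symmetric]) (simp add: algebra_simps)
    with h1 have "a + 1 = P" by linarith
    then have aP1: "a + 1 = P" .
    have "x + 1 = a*q + (b+1)" using xab by simp
    also have "\<dots> = a*q + q" using bb by simp
    also have "\<dots> = (a+1)*q" by simp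
    also have "\<dots> = q*P" using aP1 by simp
    finally have "x + 1 = q*P" .
    then show "x = p^R - 1" using qP by simp
  next
    assume h: "x = p^R - 1"
    have "P*x = P*(p^R-1)" using h by simp
    then have "b*P + a + a*(p^R-1) = P*(p^R-1)" using eq by simp
    then have "b*P + a = (P - a)*(p^R-1)" by (simp add: diff_mult_distrib)
    note bPa = this
    have bl: "b*P + a \<le> p^R - 1" using c1 by simp
    show "b*P + a = p^R - 1"
    proof (cases "p^R - 1 = 0")
      case True then show ?thesis using bl by simp
    next
      case False
      then have M0: "p^R - 1 > 0" by simp
      have "P - a \<le> 1"
      proof (rule ccontr)
        assume "\<not> P - a \<le> 1"
        then have "2*(p^R-1) \<le> (P-a)*(p^R-1)" by (intro mult_right_mono) auto
        then show False using bl bPa M0 by linarith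
      qed
      moreover have "P - a \<ge> 1" using aP by simp
      ultimately have "P - a = 1" by simp
      then show ?thesis using bPa by simp
    qed
  qed
  then show "((x mod p^(R-j))*p^j + x div p^(R-j) = p^R - 1) \<longleftrightarrow> x = p^R - 1"
    unfolding a_def b_def P_def by simp
qed

lemma shift_num_props:
  fixes p R x :: nat
  assumes M: "p^R \<ge> 2"
  shows "shift_num p R x \<le> p^R - 1"
    and "shift_num p R x = p^R - 1 \<longleftrightarrow> x = p^R - 1"
    and "shift_num p R x mod (p^R - 1) = (p*x) mod (p^R - 1)"
proof -
  have M0: "p^R - 1 > 0" using M by simp
  show "shift_num p R x \<le> p^R - 1" unfolding shift_num_def using M0
    by (simp add: less_imp_le)
  show "shift_num p R x = p^R - 1 \<longleftrightarrow> x = p^R - 1"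
  proof (cases "x = p^R - 1")
    case True then show ?thesis by (simp add: shift_num_def)
  next
    case False
    have "(p*x) mod (p^R-1) < p^R - 1" using M0 by simp
    then show ?thesis using False by (simp add: shift_num_def)
  qed
  show "shift_num p R x mod (p^R - 1) = (p*x) mod (p^R - 1)" unfolding shift_num_def
    by auto
qed

lemma iter_props:
  fixes p R x :: nat
  assumes M: "p^R \<ge> 2"
  shows "((shift_num p R)^^j) x mod (p^R - 1) = (p^j*x) mod (p^R - 1)"
    and "((shift_num p R)^^j) x = p^R - 1 \<longleftrightarrow> x = p^R - 1"
    and "x \<le> p^R - 1 \<Longrightarrow> ((shift_num p R)^^j) x \<le> p^R - 1"
proof (induction j)
  case 0
  { case 1 show ?case by simp }
  { case 2 show ?case by simp }
  { case 3 then show ?case by simp }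
next
  case (Suc j)
  { case 1
    have "((shift_num p R)^^Suc j) x mod (p^R - 1) = (p * ((shift_num p R)^^j) x) mod (p^R - 1)"
      using shift_num_props(3)[OF M] by simp
    also have "\<dots> = (p * (((shift_num p R)^^j) x mod (p^R - 1))) mod (p^R - 1)"
      by (simp add: mod_mult_right_eq)
    also have "\<dots> = (p * ((p^j*x) mod (p^R - 1))) mod (p^R - 1)" using Suc.IH(1) by simp
    also have "\<dots> = (p^Suc j*x) mod (p^R - 1)"
      by (simp add: mod_mult_right_eq mult.assoc)
    finally show ?case . }
  { case 2 show ?case using shift_num_props(2)[OF M] Suc.IH(2) by simp }
  { case 3 show ?case using shift_num_props(1)[OF M] by simp }
qed

lemma rot:
  fixes p R j x :: nat
  assumes p: "p \<ge> 2" and R: "R \<ge> 1" and j: "j \<le> R" and x: "x \<le> p^R - 1"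
  shows "((shift_num p R)^^j) x = (x mod p^(R-j))*p^j + x div p^(R-j)"
proof -
  have "p^R \<ge> p^1" using p R by (intro power_increasing) auto
  then have M: "p^R \<ge> 2" using p by simp
  define s where "s = ((shift_num p R)^^j) x"
  define c where "c = (x mod p^(R-j))*p^j + x div p^(R-j)"
  have s1: "s \<le> p^R - 1" using iter_props(3)[OF M x] s_def by simp
  have c1: "c \<le> p^R - 1" using cand(1)[OF p j x] c_def by simp
  have "s mod (p^R - 1) = (p^j*x) mod (p^R - 1)" using iter_props(1)[OF M] s_def by simp
  also have "\<dots> = c mod (p^R - 1)" using cand(2)[OF p j x] c_def by simp
  finally have sc: "s mod (p^R - 1) = c mod (p^R - 1)" .
  have e: "s = p^R - 1 \<longleftrightarrow> c = p^R - 1" using iter_props(2)[OF M] cand(3)[OF p j x] s_def c_def by simp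
  show ?thesis
  proof (cases "s = p^R - 1")
    case True then show ?thesis using e s_def c_def by simp
  next
    case False
    then have "s < p^R - 1" "c < p^R - 1" using e s1 c1 by auto
    then have "s = c" using sc by simp
    then show ?thesis using s_def c_def by simp
  qed
qed

lemma shift_pow: "(shift p R ^^ j) X = (\<lambda>d. (shift_num p R ^^ j) (X d))"
  by (induction j) (auto simp: shift_def)

lemma ds_eq: "p \<ge> 2 \<Longrightarrow> digit_sum p y = y mod p + digit_sum p (y div p)"
  by (subst digit_sum.simps) auto

lemma ds_lt: "p \<ge> 2 \<Longrightarrow> a < p \<Longrightarrow> digit_sum p a = a"
  using ds_eq[of p a] by simp

lemma ds_add: "p \<ge> 2 \<Longrightarrow> y < p^j \<Longrightarrow> digit_sum p (x*p^j + y) = digit_sum p x + digit_sum p y"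
proof (induction j arbitrary: y)
  case 0 then show ?case by simp
next
  case (Suc j)
  define z where "z = x*p^Suc j + y"
  have z: "z = y + p*(x*p^j)" unfolding z_def by (simp add: algebra_simps)
  have zm: "z mod p = y mod p" unfolding z by simp
  have zd: "z div p = x*p^j + y div p" unfolding z using Suc.prems by simp
  have yd: "y div p < p^j" using Suc.prems
    by (simp add: div_less_iff_less_mult mult.commute)
  have "digit_sum p z = z mod p + digit_sum p (z div p)" using ds_eq Suc.prems by blast
  also have "\<dots> = y mod p + digit_sum p x + digit_sum p (y div p)"
    using zm zd Suc.IH[OF Suc.prems(1) yd] by simp
  also have "\<dots> = digit_sum p x + digit_sum p y" using ds_eq[OF Suc.prems(1), of y] by simp
  finally show ?case unfolding z_def .
qed

lemma ds_shift:
  assumes p: "p \<ge> 2" and R: "R \<ge> 1" and x: "x \<le> p^R - 1"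
  shows "digit_sum p (shift_num p R x) = digit_sum p x"
proof -
  have r1: "shift_num p R x = (x mod p^(R-1))*p^1 + x div p^(R-1)"
    using rot[OF p R _ x, of 1] R by simp
  have "p^R \<ge> 1" using p by simp
  then have xR: "x < p^R" using x by linarith
  have pR: "p^R = p * p^(R-1)" using R by (simp add: power_eq_if)
  have "x < p * p^(R-1)" using xR pR by simp
  then have a: "x div p^(R-1) < p" by (intro less_mult_imp_div_less)
  have "digit_sum p (shift_num p R x) = digit_sum p (x mod p^(R-1)) + digit_sum p (x div p^(R-1))"
    unfolding r1 by (rule ds_add[OF p]) (simp only: power_one_right a)
  also have "\<dots> = digit_sum p ((x div p^(R-1)) * p^(R-1) + x mod p^(R-1))"
    using ds_add[OF p, of "x mod p^(R-1)" "R-1" "x div p^(R-1)"] p by simp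
  also have "\<dots> = digit_sum p x" by (simp only: div_mult_mod_eq)
  finally show ?thesis .
qed


lemma pow_ge2: "p \<ge> 2 \<Longrightarrow> R \<ge> 1 \<Longrightarrow> p^R \<ge> (2::nat)"
proof -
  assume "p \<ge> 2" "R \<ge> 1"
  then have "p^R \<ge> p^1" by (intro power_increasing) auto
  then show ?thesis using \<open>p \<ge> 2\<close> by simp
qed

lemma shift_num_pt:
  assumes p: "p \<ge> 2" and R: "R \<ge> 1" and j: "j \<le> R" and x: "x \<le> p^R - 1"
  shows "(shift_num p R ^^ j) x + (x div p^(R-j))*(p^R-1) = p^j * x"
  using cand(2)[OF p j x] rot[OF p R j x] by simp

lemma vsum_key:
  assumes p: "p \<ge> 2" and R: "R \<ge> 1" and j: "j \<le> R" and X: "\<forall>d\<in>D. X d \<le> p^R - 1"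
  shows "vsum D ((shift p R ^^ j) X) i + (p^R-1) * (\<Sum>d\<in>D. (X d div p^(R-j)) * d i) = p^j * vsum D X i"
proof -
  have "vsum D ((shift p R ^^ j) X) i + (p^R-1) * (\<Sum>d\<in>D. (X d div p^(R-j)) * d i)
      = (\<Sum>d\<in>D. ((shift_num p R ^^ j) (X d) + (X d div p^(R-j))*(p^R-1)) * d i)"
    unfolding vsum_def shift_pow by (simp add: sum_distrib_left sum.distrib algebra_simps)
  also have "\<dots> = (\<Sum>d\<in>D. (p^j * X d) * d i)"
    using shift_num_pt[OF p R j] X by (intro sum.cong) auto
  also have "\<dots> = p^j * vsum D X i" unfolding vsum_def by (simp add: sum_distrib_left mult.assoc)
  finally show ?thesis .
qed

lemma phi_closed:
  assumes p: "p \<ge> 2" and R: "R \<ge> 1" and j: "j \<le> R" and X: "\<forall>d\<in>D. X d \<le> p^R - 1"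
    and g: "vsum D X i = (p^R-1) * g"
  shows "phi D p R X j i = real (p^j * g) - real (\<Sum>d\<in>D. (X d div p^(R-j)) * d i)"
proof -
  define T where "T = (\<Sum>d\<in>D. (X d div p^(R-j)) * d i)"
  define M where "M = p^R - 1"
  have M0: "M > 0" unfolding M_def using pow_ge2[OF p R] by simp
  have k: "vsum D ((shift p R ^^ j) X) i + M * T = M * (p^j * g)"
    using vsum_key[OF p R j X, of i] g unfolding T_def M_def by (simp add: algebra_simps)
  then have "real (vsum D ((shift p R ^^ j) X) i) + real M * real T = real M * real (p^j * g)"
    by (metis of_nat_add of_nat_mult)
  then have "real (vsum D ((shift p R ^^ j) X) i) = real M * (real (p^j * g) - real T)"
    by (simp add: algebra_simps)
  then show ?thesis unfolding phi_def M_def[symmetric] T_def[symmetric] using M0 by simp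
qed

lemma shift_num_pos:
  assumes p: "p \<ge> 2" and R: "R \<ge> 1" and x: "x \<le> p^R - 1" and x0: "x > 0"
  shows "shift_num p R x > 0"
proof -
  have r1: "shift_num p R x = (x mod p^(R-1))*p^1 + x div p^(R-1)"
    using rot[OF p R _ x, of 1] R by simp
  have "x = (x div p^(R-1))*p^(R-1) + x mod p^(R-1)" by (rule div_mult_mod_eq[symmetric])
  then have "x div p^(R-1) > 0 \<or> x mod p^(R-1) > 0" using x0
    by (metis add_cancel_right_left gr0I mult_is_0)
  then show ?thesis unfolding r1 using p by auto
qed

lemma sum_pos_ex:
  fixes f :: "'a \<Rightarrow> nat"
  assumes "finite A" "sum f A > 0" shows "\<exists>a\<in>A. f a > 0"
proof (rule ccontr)
  assume "\<not> (\<exists>a\<in>A. f a > 0)"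
  then have "\<forall>a\<in>A. f a = 0" by auto
  then have "sum f A = 0" by simp
  then show False using assms by simp
qed

lemma sum_pos_of_ex:
  fixes f :: "'a \<Rightarrow> nat"
  assumes "finite A" "a \<in> A" "f a > 0" shows "sum f A > 0"
  using sum_pos2[of A a f] assms by simp

lemma shift_E:
  assumes p: "p \<ge> 2" and fin: "finite D" and U: "U \<in> E_set D p r"
  shows "shift p r U \<in> E_set D p r" and "sp D p (shift p r U) = sp D p U"
proof -
  have R: "r \<ge> 1" and b: "\<forall>d\<in>D. U d \<le> p^r - 1" and z: "\<forall>d. d \<notin> D \<longrightarrow> U d = 0"
    and dv: "\<forall>i. (p^r - 1) dvd vsum D U i" and pos: "\<forall>i. 0 < vsum D U i"
    using U unfolding E_set_def by auto
  have M: "p^r \<ge> 2" using pow_ge2[OF p R] .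
  have s1: "shift p r U = (shift p r ^^ 1) U" by simp
  have b2: "\<forall>d\<in>D. shift p r U d \<le> p^r - 1" unfolding shift_def using shift_num_props(1)[OF M] by simp
  have z2: "\<forall>d. d \<notin> D \<longrightarrow> shift p r U d = 0" unfolding shift_def shift_num_def using z M by auto
  have dv2: "(p^r - 1) dvd vsum D (shift p r U) i" for i
  proof -
    have "vsum D (shift p r U) i + (p^r-1) * (\<Sum>d\<in>D. (U d div p^(r-1)) * d i) = p^1 * vsum D U i"
      using vsum_key[OF p R R b, of i] by simp
    moreover have "(p^r - 1) dvd p^1 * vsum D U i" using dv by simp
    ultimately have "(p^r - 1) dvd vsum D (shift p r U) i + (\<Sum>d\<in>D. (U d div p^(r-1)) * d i) * (p^r-1)"
      by (simp add: mult.commute)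
    then show ?thesis by (simp only: dvd_add_times_triv_right_iff)
  qed
  have pos2: "0 < vsum D (shift p r U) i" for i
  proof -
    obtain d where d: "d \<in> D" "U d * d i > 0" using sum_pos_ex[OF fin] pos unfolding vsum_def by blast
    have "shift p r U d > 0" unfolding shift_def using shift_num_pos[OF p R] b d by auto
    then have "shift p r U d * d i > 0" using d by simp
    then show ?thesis unfolding vsum_def by (rule sum_pos_of_ex[OF fin d(1)])
  qed
  show "shift p r U \<in> E_set D p r" unfolding E_set_def using R b2 z2 dv2 pos2 by auto
  show "sp D p (shift p r U) = sp D p U" unfolding sp_def shift_def
    using ds_shift[OF p R] b by (intro sum.cong) auto
qed

lemma shiftk_E:
  assumes p: "p \<ge> 2" and fin: "finite D" and U: "U \<in> E_set D p r"
  shows "(shift p r ^^ k) U \<in> E_set D p r \<and> sp D p ((shift p r ^^ k) U) = sp D p U"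
proof (induction k)
  case 0 then show ?case using U by simp
next
  case (Suc k) then show ?case using shift_E[OF p fin, of "(shift p r ^^ k) U"] by simp
qed

lemma shift_period:
  assumes p: "p \<ge> 2" and Y: "Y \<in> E_set D p r"
  shows "(shift p r ^^ r) Y = Y"
proof
  fix d
  have R: "r \<ge> 1" using Y unfolding E_set_def by auto
  have "Y d \<le> p^r - 1" using Y unfolding E_set_def by (cases "d \<in> D") auto
  then show "(shift p r ^^ r) Y d = Y d" unfolding shift_pow using rot[OF p R le_refl] by simp
qed

lemma phi_shift: "phi D p r ((shift p r ^^ k) U) j = phi D p r U (j + k)"
  unfolding phi_def by (simp add: funpow_add)

lemma phi_period:
  assumes p: "p \<ge> 2" and fin: "finite D" and U: "U \<in> E_set D p r"
  shows "phi D p r U (k + r) = phi D p r U k"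
proof -
  have Y: "(shift p r ^^ k) U \<in> E_set D p r" using shiftk_E[OF p fin U] by blast
  have "phi D p r U (k + r) = phi D p r ((shift p r ^^ k) U) r" using phi_shift by (metis add.commute)
  also have "\<dots> = phi D p r ((shift p r ^^ r) ((shift p r ^^ k) U)) 0" using phi_shift[of D p r r _ 0] by simp
  also have "\<dots> = phi D p r ((shift p r ^^ k) U) 0" by (subst shift_period[OF p Y]) (rule refl)
  also have "\<dots> = phi D p r U k" using phi_shift[of D p r k U 0] by simp
  finally show ?thesis .
qed


lemma decomp_core:
  assumes p: "p \<ge> 2" and fin: "finite D" and W: "W \<in> E_set D p r"
    and m: "0 < m" "m < r"
    and eq: "phi D p r W m = phi D p r W 0"
  defines "V \<equiv> (\<lambda>d. W d div p^(r-m))" and "L \<equiv> (\<lambda>d. W d mod p^(r-m))"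
  shows "V \<in> E_set D p m" "L \<in> E_set D p (r-m)" "sp D p W = sp D p V + sp D p L"
    "\<forall>j<r. phi D p r W j \<in> phi D p m V ` {0..<m} \<union> phi D p (r-m) L ` {0..<r-m}"
proof -
  have R: "r \<ge> 1" and b: "\<forall>d\<in>D. W d \<le> p^r - 1" and z: "\<forall>d. d \<notin> D \<longrightarrow> W d = 0"
    and dv: "\<forall>i. (p^r - 1) dvd vsum D W i" and pos: "\<forall>i. 0 < vsum D W i"
    using W unfolding E_set_def by auto
  have p0: "p > 0" using p by simp
  define M where "M = p^r - 1"
  have M0: "M > 0" unfolding M_def using pow_ge2[OF p R] by simp
  define g where "g = (\<lambda>i. vsum D W i div M)"
  have hg: "vsum D W i = M * g i" for i unfolding g_def M_def using dv by simp
  have gpos: "g i > 0" for i using hg[of i] pos by (metis gr0I mult_0_right)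
  define q where "q = p^(r-m)"
  define P where "P = p^m"
  have qP: "q * P = p^r" unfolding q_def P_def using m by (simp add: power_add[symmetric])
  have q2: "q \<ge> 2" unfolding q_def using pow_ge2[OF p] m by simp
  have P2: "P \<ge> 2" unfolding P_def using pow_ge2[OF p] m by simp
  have Mr: "real M \<noteq> 0" using M0 by simp
  have e1: "vsum D ((shift p r ^^ m) W) i = vsum D W i" for i
  proof -
    have "phi D p r W m i = phi D p r W 0 i" using eq by simp
    then have "real (vsum D ((shift p r ^^ m) W) i) / real M = real (vsum D W i) / real M"
      unfolding phi_def M_def by simp
    then show ?thesis using Mr by simp
  qed
  have hV: "vsum D V i = (P - 1) * g i" for i
  proof -
    have k: "vsum D ((shift p r ^^ m) W) i + M * vsum D V i = P * vsum D W i"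
      using vsum_key[OF p R _ b, of m i] m unfolding M_def P_def V_def q_def vsum_def by simp
    then have "M * g i + M * vsum D V i = M * (P * g i)" using e1 hg by (simp add: algebra_simps)
    then have "M * (g i + vsum D V i) = M * (P * g i)" by (simp add: algebra_simps)
    then have "g i + vsum D V i = P * g i" using M0 by simp
    then show ?thesis by (simp add: diff_mult_distrib)
  qed
  have Wpt: "W d = V d * q + L d" for d unfolding V_def L_def q_def by (rule div_mult_mod_eq[symmetric])
  have hWVL: "vsum D W i = q * vsum D V i + vsum D L i" for i
  proof -
    have "vsum D W i = (\<Sum>d\<in>D. (V d * q + L d) * d i)" unfolding vsum_def using Wpt by simp
    also have "\<dots> = q * vsum D V i + vsum D L i"
      unfolding vsum_def by (simp add: algebra_simps sum.distrib sum_distrib_left)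
    finally show ?thesis .
  qed
  have hL: "vsum D L i = (q - 1) * g i" for i
  proof -
    have B: "q * (P - 1) = q * P - q" by (simp add: diff_mult_distrib2)
    have "q \<le> q * P" using P2 by simp
    then have Mq: "M = q * (P - 1) + (q - 1)" unfolding M_def using B qP q2 by linarith
    have "M * g i = q * ((P - 1) * g i) + vsum D L i" using hWVL[of i] hV[of i] hg[of i] by simp
    then have "q * (P - 1) * g i + (q - 1) * g i = q * (P - 1) * g i + vsum D L i"
      unfolding Mq by (simp add: algebra_simps)
    then show ?thesis by simp
  qed
  have Vb: "\<forall>d\<in>D. V d \<le> p^m - 1"
  proof
    fix d assume d: "d \<in> D"
    have w1: "W d \<le> p^r - 1" using b d by simp
    have "P * q = p^r" using qP by (simp add: mult.commute)
    then have "W d < P * q" using w1 M0 unfolding M_def by linarith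
    then have "V d < P" unfolding V_def q_def[symmetric] by (rule less_mult_imp_div_less)
    then show "V d \<le> p^m - 1" unfolding P_def by simp
  qed
  have Lb: "\<forall>d\<in>D. L d \<le> p^(r-m) - 1"
  proof
    fix d assume d: "d \<in> D"
    have "L d < q" unfolding L_def q_def using p0 by simp
    then show "L d \<le> p^(r-m) - 1" unfolding q_def by simp
  qed
  show VE: "V \<in> E_set D p m" unfolding E_set_def
    using m Vb z hV gpos P2 unfolding V_def P_def by auto
  show LE: "L \<in> E_set D p (r-m)" unfolding E_set_def
    using m Lb z hL gpos q2 unfolding L_def q_def by auto
  show "sp D p W = sp D p V + sp D p L"
  proof -
    have "sp D p W = (\<Sum>d\<in>D. digit_sum p (V d * p^(r-m) + L d))" unfolding sp_def
      using Wpt q_def by simp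
    also have "\<dots> = (\<Sum>d\<in>D. digit_sum p (V d) + digit_sum p (L d))"
    proof (rule sum.cong)
      fix d assume "d \<in> D"
      have "L d < p^(r-m)" unfolding L_def using p0 by simp
      then show "digit_sum p (V d * p^(r-m) + L d) = digit_sum p (V d) + digit_sum p (L d)"
        by (rule ds_add[OF p])
    qed simp
    also have "\<dots> = sp D p V + sp D p L" unfolding sp_def by (simp add: sum.distrib)
    finally show ?thesis .
  qed
  have phiV: "phi D p r W j = phi D p m V j" if j: "j \<le> m" for j
  proof
    fix i
    have jr: "j \<le> r" using j m by simp
    have "phi D p r W j i = real (p^j * g i) - real (\<Sum>d\<in>D. (W d div p^(r-j)) * d i)"
      using phi_closed[OF p R jr b] hg unfolding M_def by simp
    also have "\<dots> = real (p^j * g i) - real (\<Sum>d\<in>D. (V d div p^(m-j)) * d i)"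
    proof -
      have "p^(r-j) = q * p^(m-j)" unfolding q_def using j m by (simp add: power_add[symmetric])
      then have "W d div p^(r-j) = V d div p^(m-j)" for d unfolding V_def q_def
        by (simp add: div_mult2_eq)
      then show ?thesis by simp
    qed
    also have "\<dots> = phi D p m V j i"
      using phi_closed[OF p _ j Vb, of i "g i"] hV m unfolding P_def by simp
    finally show "phi D p r W j i = phi D p m V j i" .
  qed
  have phiL: "phi D p r W (m + j) = phi D p (r-m) L j" if j: "j \<le> r - m" for j
  proof
    fix i
    have jr: "m + j \<le> r" using j m by simp
    have Rm: "r - m \<ge> 1" using m by simp
    define s where "s = p^(r-m-j)"
    have jj: "j + (r - m - j) = r - m" using j by simp
    have qs: "q = p^j * s" unfolding q_def s_def by (simp only: power_add[symmetric] jj)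
    have s0: "s > 0" unfolding s_def using p by simp
    have dd: "W d div s = V d * p^j + L d div s" for d
    proof -
      have "W d = L d + (V d * p^j) * s" using Wpt[of d] qs by (simp add: algebra_simps)
      then show ?thesis using s0 by simp
    qed
    define TL where "TL = (\<Sum>d\<in>D. (L d div s) * d i)"
    have "phi D p r W (m + j) i = real (p^(m+j) * g i) - real (\<Sum>d\<in>D. (W d div p^(r-(m+j))) * d i)"
      using phi_closed[OF p R jr b] hg unfolding M_def by simp
    also have "(\<Sum>d\<in>D. (W d div p^(r-(m+j))) * d i) = p^j * vsum D V i + TL"
    proof -
      have ps: "p^(r-(m+j)) = s" unfolding s_def by (simp add: diff_diff_left)
      then have "(\<Sum>d\<in>D. (W d div p^(r-(m+j))) * d i) = (\<Sum>d\<in>D. (V d * p^j + L d div s) * d i)"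
        unfolding ps using dd by simp
      also have "\<dots> = p^j * vsum D V i + TL" unfolding vsum_def TL_def
        by (simp add: algebra_simps sum.distrib sum_distrib_left)
      finally show ?thesis .
    qed
    also have "real (p^(m+j) * g i) - real (p^j * vsum D V i + TL) = real (p^j * g i) - real TL"
    proof -
      have "real (P - 1) = real P - 1" using P2 by (simp add: of_nat_diff)
      then have "real (p^j * vsum D V i) = real (p^j) * real P * real (g i) - real (p^j) * real (g i)"
        using hV[of i] by (simp add: algebra_simps)
      moreover have "real (p^(m+j) * g i) = real (p^j) * real P * real (g i)"
        unfolding P_def by (simp add: power_add algebra_simps)
      ultimately show ?thesis by simp
    qed
    also have "\<dots> = phi D p (r-m) L j i"
      using phi_closed[OF p Rm j Lb, of i "g i"] hL unfolding TL_def s_def q_def by simp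
    finally show "phi D p r W (m + j) i = phi D p (r-m) L j i" .
  qed
  show "\<forall>j<r. phi D p r W j \<in> phi D p m V ` {0..<m} \<union> phi D p (r-m) L ` {0..<r-m}"
  proof (intro allI impI)
    fix j assume j: "j < r"
    show "phi D p r W j \<in> phi D p m V ` {0..<m} \<union> phi D p (r-m) L ` {0..<r-m}"
    proof (cases "j < m")
      case True then show ?thesis using phiV[of j] by auto
    next
      case False
      then have "j = m + (j - m)" "j - m < r - m" using j by auto
      then show ?thesis using phiL[of "j - m"] by (metis UnI2 imageI atLeastLessThan_iff le_less zero_le)
    qed
  qed
qed


lemma inf_lower:
  assumes "1 \<le> R" "X \<in> E_set D p R"
  shows "Inf {real (sp D p U) / real r | r U. 1 \<le> r \<and> U \<in> E_set D p r} \<le> real (sp D p X) / real R"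
proof (rule cInf_lower)
  show "real (sp D p X) / real R \<in> {real (sp D p U) / real r | r U. 1 \<le> r \<and> U \<in> E_set D p r}"
    using assms by blast
  show "bdd_below {real (sp D p U) / real r | r U. 1 \<le> r \<and> U \<in> E_set D p r}"
    by (rule bdd_belowI[of _ 0]) auto
qed

lemma decomp:
  assumes p: "p \<ge> 2" and fin: "finite D" and U: "minimal D p r U"
    and k: "k1 < k2" "k2 < r" and eq: "phi D p r U k1 = phi D p r U k2"
  shows "\<exists>m V L. 0 < m \<and> m < r \<and> minimal D p m V \<and> minimal D p (r-m) L \<and>
     phi D p r U ` {0..<r} \<subseteq> phi D p m V ` {0..<m} \<union> phi D p (r-m) L ` {0..<r-m}"
proof -
  have UE: "U \<in> E_set D p r" using U unfolding minimal_def by simp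
  define W where "W = (shift p r ^^ k1) U"
  have WE: "W \<in> E_set D p r" and spW: "sp D p W = sp D p U"
    using shiftk_E[OF p fin UE, of k1] unfolding W_def by auto
  define m where "m = k2 - k1"
  have m: "0 < m" "m < r" using k unfolding m_def by auto
  have pW: "phi D p r W j = phi D p r U (j + k1)" for j unfolding W_def by (rule phi_shift)
  have eqW: "phi D p r W m = phi D p r W 0" using pW[of m] pW[of 0] eq k unfolding m_def by simp
  define V where "V = (\<lambda>d. W d div p^(r-m))"
  define L where "L = (\<lambda>d. W d mod p^(r-m))"
  note dc = decomp_core[OF p fin WE m eqW, folded V_def L_def]
  define I where "I = Inf {real (sp D p U) / real r | r U. 1 \<le> r \<and> U \<in> E_set D p r}"
  have pr: "real p - 1 > 0" using p by simp
  have dI: "delta p D = I / (real p - 1)" unfolding delta_def I_def by simp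
  have spU: "real (sp D p U) = real r * I" using U pr unfolding minimal_def dI by simp
  have lV: "real m * I \<le> real (sp D p V)"
    using inf_lower[of m V D p] dc(1) m unfolding I_def[symmetric] by (simp add: field_simps)
  have lL: "real (r - m) * I \<le> real (sp D p L)"
    using inf_lower[of "r-m" L D p] dc(2) m unfolding I_def[symmetric] by (simp add: field_simps)
  have s0: "sp D p V + sp D p L = sp D p U" using dc(3) spW by simp
  then have "real (sp D p V + sp D p L) = real r * I" using spU by simp
  then have sum: "real (sp D p V) + real (sp D p L) = real r * I" by simp
  have rm: "real (r - m) = real r - real m" using m by (simp add: of_nat_diff)
  have eV: "real (sp D p V) = real m * I" using lV lL sum rm by (simp add: algebra_simps)
  have eL: "real (sp D p L) = real (r - m) * I" using lV lL sum rm by (simp add: algebra_simps)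
  have mV: "minimal D p m V" unfolding minimal_def dI using dc(1) eV pr by simp
  have mL: "minimal D p (r-m) L" unfolding minimal_def dI using dc(2) eL pr by simp
  have img: "phi D p r U ` {0..<r} \<subseteq> phi D p m V ` {0..<m} \<union> phi D p (r-m) L ` {0..<r-m}"
  proof
    fix y assume "y \<in> phi D p r U ` {0..<r}"
    then obtain kk where kk: "kk < r" "y = phi D p r U kk" by auto
    show "y \<in> phi D p m V ` {0..<m} \<union> phi D p (r-m) L ` {0..<r-m}"
    proof (cases "k1 \<le> kk")
      case True
      then have "y = phi D p r W (kk - k1)" using pW[of "kk - k1"] kk by simp
      moreover have "kk - k1 < r" using kk by simp
      ultimately show ?thesis using dc(4) by simp
    next
      case False
      have a1: "kk + r - k1 + k1 = kk + r" using k by simp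
      have "phi D p r W (kk + r - k1) = phi D p r U (kk + r - k1 + k1)" by (rule pW)
      also have "\<dots> = phi D p r U (kk + r)" by (simp only: a1)
      also have "\<dots> = phi D p r U kk" by (rule phi_period[OF p fin UE])
      finally have "y = phi D p r W (kk + r - k1)" using kk(2) by simp
      moreover have "kk + r - k1 < r" using False k by linarith
      ultimately show ?thesis using dc(4) by simp
    qed
  qed
  show ?thesis using m mV mL img by blast
qed

lemma MI_sub:
  assumes "(r, U) \<in> MI D p" shows "phi D p r U ` {0..<r} \<subseteq> Sigma_p p D"
proof
  fix y assume y: "y \<in> phi D p r U ` {0..<r}"
  show "y \<in> Sigma_p p D" unfolding Sigma_p_def
    by (rule UN_I[of "(r,U)"]) (use assms y in simp_all)
qed

lemma main_ind:
  assumes p: "p \<ge> 2" and fin: "finite D"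
  shows "minimal D p r U \<Longrightarrow> phi D p r U ` {0..<r} \<subseteq> Sigma_p p D"
proof (induction r arbitrary: U rule: less_induct)
  case (less r U)
  show ?case
  proof (cases "irreducible_sol D p r U")
    case True
    then have "(r, U) \<in> MI D p" using less.prems unfolding MI_def by simp
    then show ?thesis by (rule MI_sub)
  next
    case False
    then obtain a b where ab: "a < r" "b < r" "a \<noteq> b" "phi D p r U a = phi D p r U b"
    proof -
      have "\<not> (\<forall>x\<in>{0..<r}. \<forall>y\<in>{0..<r}. phi D p r U x = phi D p r U y \<longrightarrow> x = y)"
        using False unfolding irreducible_sol_def inj_on_def by simp
      then show ?thesis using that by auto
    qed
    obtain k1 k2 where kk: "k1 < k2" "k2 < r" "phi D p r U k1 = phi D p r U k2"
    proof (cases "a < b")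
      case True show ?thesis by (rule that[of a b]) (use ab True in auto)
    next
      case False then have "b < a" using ab by simp
      show ?thesis by (rule that[of b a]) (use ab \<open>b < a\<close> in auto)
    qed
    obtain m V L where mVL: "0 < m" "m < r" "minimal D p m V" "minimal D p (r-m) L"
      "phi D p r U ` {0..<r} \<subseteq> phi D p m V ` {0..<m} \<union> phi D p (r-m) L ` {0..<r-m}"
      using decomp[OF p fin less.prems kk] by blast
    have s1: "phi D p m V ` {0..<m} \<subseteq> Sigma_p p D" using less.IH[OF mVL(2) mVL(3)] .
    have "r - m < r" using mVL(1,2) by simp
    then have s2: "phi D p (r-m) L ` {0..<r-m} \<subseteq> Sigma_p p D"
      using less.IH[OF _ mVL(4)] by simp
    show ?thesis by (rule subset_trans[OF mVL(5) Un_least[OF s1 s2]])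
  qed
qed

theorem lemma2p11:
  fixes D :: "('n::finite \<Rightarrow> nat) set" and p r :: nat and U :: "('n \<Rightarrow> nat) \<Rightarrow> nat"
  assumes "finite D"
    and "\<forall>i. \<exists>d\<in>D. d i \<noteq> 0"
    and "prime p"
    and "U \<in> E_set D p r"
    and "minimal D p r U"
  shows "phi D p r U ` {0..<r} \<subseteq> Sigma_p p D"
proof -
  have "p \<ge> 2" using assms(3) prime_ge_2_nat by blast
  then show ?thesis using main_ind[OF _ assms(1) assms(5)] by blast
qed

end
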